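(* Let $d\geq 2$ and let $\rho$ be a diagonal symmetric (DS) state acting on $\mathbb{C}^d\otimes\mathbb{C}^d$, with associated matrix $M(\rho)$. Then $\rho$ is separable if and only if $M(\rho)$ is completely positive.
   Context: Let $\{\ket{0},\dots,\ket{d-1}\}$ be the computational basis of $\mathbb{C}^d$. Define $\ket{D_{ii}}=\ket{ii}$ and, for $i<j$, $\ket{D_{ij}}=(\ket{ij}+\ket{ji})/\sqrt{2}$. A state $\rho$ on $\mathbb{C}^d\otimes\mathbb{C}^d$ is diagonal symmetric (DS) if $\rho=\sum_{0\le i\le j<d}p_{ij}\ket{D_{ij}}\bra{D_{ij}}$ with $p_{ij}\ge 0$ and $\sum_{i\le j}p_{ij}=1$; set $p_{ji}=p_{ij}$. Its associated matrix $M(\rho)$ is the real symmetric $d\times d$ matrix with entries $M(\rho)_{ii}=p_{ii}$ and $M(\rho)_{ij}=p_{ij}/2$ for $i\neq j$. A state is separable if it is a convex combination of product states $\rho^A\otimes\rho^B$. A real $d\times d$ matrix $A$ is completely positive if $A=BB^T$ for some real $d\times k$ matrix $B$ ($k\ge1$) with all entries $B_{ij}\ge 0$. *)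

theory Defs
  imports "HOL-Analysis.Analysis"
begin

text \<open>Matrices on C^d are functions nat => nat => complex, only entries with
indices < d matter. Operators on C^d (x) C^d are indexed by pairs (a,b) with
a,b < d, the pair (a,b) standing for the basis vector |a b>.\<close>

type_synonym cmat = "nat \<Rightarrow> nat \<Rightarrow> complex"
type_synonym bop = "nat \<times> nat \<Rightarrow> nat \<times> nat \<Rightarrow> complex"

definition density :: "nat \<Rightarrow> cmat \<Rightarrow> bool" where
  "density d A \<longleftrightarrow>
     (\<forall>v :: nat \<Rightarrow> complex.
        Im (\<Sum>i<d. \<Sum>j<d. cnj (v i) * A i j * v j) = 0 \<and>
        Re (\<Sum>i<d. \<Sum>j<d. cnj (v i) * A i j * v j) \<ge> 0)
     \<and> (\<Sum>i<d. A i i) = 1"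

text \<open>Separable: finite convex combination of product states rho^A (x) rho^B.
(rho^A (x) rho^B) at ((i,k),(j,l)) = rho^A i j * rho^B k l.\<close>
definition separable :: "nat \<Rightarrow> bop \<Rightarrow> bool" where
  "separable d \<rho> \<longleftrightarrow>
     (\<exists>(n::nat) (w::nat \<Rightarrow> real) (A::nat \<Rightarrow> cmat) (B::nat \<Rightarrow> cmat).
        (\<forall>m<n. w m \<ge> 0) \<and> (\<Sum>m<n. w m) = 1 \<and>
        (\<forall>m<n. density d (A m) \<and> density d (B m)) \<and>
        (\<forall>i<d. \<forall>k<d. \<forall>j<d. \<forall>l<d.
            \<rho> (i,k) (j,l) = (\<Sum>m<n. complex_of_real (w m) * A m i j * B m k l)))"

definition Dket :: "nat \<Rightarrow> nat \<Rightarrow> nat \<times> nat \<Rightarrow> complex" where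
  "Dket i j = (\<lambda>(a,b).
     if i = j then (if a = i \<and> b = i then 1 else 0)
     else (if (a = i \<and> b = j) \<or> (a = j \<and> b = i) then complex_of_real (1 / sqrt 2) else 0))"

definition upper_pairs :: "nat \<Rightarrow> (nat \<times> nat) set" where
  "upper_pairs d = {(i,j). i \<le> j \<and> j < d}"

definition ds_weights :: "nat \<Rightarrow> (nat \<Rightarrow> nat \<Rightarrow> real) \<Rightarrow> bool" where
  "ds_weights d p \<longleftrightarrow>
     (\<forall>(i,j)\<in>upper_pairs d. p i j \<ge> 0) \<and> (\<Sum>(i,j)\<in>upper_pairs d. p i j) = 1"

definition ds_state :: "nat \<Rightarrow> (nat \<Rightarrow> nat \<Rightarrow> real) \<Rightarrow> bop" where
  "ds_state d p = (\<lambda>x y. \<Sum>(i,j)\<in>upper_pairs d.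
       complex_of_real (p i j) * Dket i j x * cnj (Dket i j y))"

definition ds_matrix :: "nat \<Rightarrow> (nat \<Rightarrow> nat \<Rightarrow> real) \<Rightarrow> nat \<Rightarrow> nat \<Rightarrow> real" where
  "ds_matrix d p = (\<lambda>i j. if i = j then p i i else p (min i j) (max i j) / 2)"

definition completely_positive :: "nat \<Rightarrow> (nat \<Rightarrow> nat \<Rightarrow> real) \<Rightarrow> bool" where
  "completely_positive d A \<longleftrightarrow>
     (\<exists>(k::nat) (B::nat \<Rightarrow> nat \<Rightarrow> real). k \<ge> 1 \<and>
        (\<forall>i<d. \<forall>m<k. B i m \<ge> 0) \<and>
        (\<forall>i<d. \<forall>j<d. A i j = (\<Sum>m<k. B i m * B j m)))"

end

theory Submission
  imports Defs
begin

lemma sum_two: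
  fixes f :: "nat \<Rightarrow> 'a::comm_monoid_add"
  assumes "a \<noteq> b" "a < d" "b < d" "\<And>j. j \<noteq> a \<Longrightarrow> j \<noteq> b \<Longrightarrow> f j = 0"
  shows "(\<Sum>j<d. f j) = f a + f b"
proof -
  have "(\<Sum>j<d. f j) = (\<Sum>j\<in>{a,b}. f j)"
    by (rule sum.mono_neutral_right) (use assms in auto)
  then show ?thesis using assms by simp
qed

lemma sum_one:
  fixes f :: "nat \<Rightarrow> 'a::comm_monoid_add"
  assumes "a < d" "\<And>j. j \<noteq> a \<Longrightarrow> f j = 0"
  shows "(\<Sum>j<d. f j) = f a"
proof -
  have "(\<Sum>j<d. f j) = (\<Sum>j\<in>{a}. f j)"
    by (rule sum.mono_neutral_right) (use assms in auto)
  then show ?thesis using assms by simp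
qed

lemma density_diag:
  assumes "density d A" "a < d"
  shows "Im (A a a) = 0" "Re (A a a) \<ge> 0"
proof -
  define v where "v = (\<lambda>i::nat. if i = a then (1::complex) else 0)"
  have inner: "(\<Sum>j<d. cnj (v i) * A i j * v j) = cnj (v i) * A i a" for i
    using assms(2) by (subst sum_one[of a]) (auto simp: v_def)
  have "(\<Sum>i<d. \<Sum>j<d. cnj (v i) * A i j * v j) = A a a"
    unfolding inner using assms(2) by (subst sum_one[of a]) (auto simp: v_def)
  moreover have "Im (\<Sum>i<d. \<Sum>j<d. cnj (v i) * A i j * v j) = 0 \<and> Re (\<Sum>i<d. \<Sum>j<d. cnj (v i) * A i j * v j) \<ge> 0"
    using assms(1) unfolding density_def by blast
  ultimately show "Im (A a a) = 0" "Re (A a a) \<ge> 0" by simp_all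
qed

lemma density_quad2:
  assumes "density d A" "a < d" "b < d" "a \<noteq> b"
  shows "Im (cnj x * A a a * x + cnj x * A a b * y + cnj y * A b a * x + cnj y * A b b * y) = 0"
    "Re (cnj x * A a a * x + cnj x * A a b * y + cnj y * A b a * x + cnj y * A b b * y) \<ge> 0"
proof -
  define v where "v = (\<lambda>i::nat. if i = a then x else if i = b then y else 0)"
  have inner: "(\<Sum>j<d. cnj (v i) * A i j * v j) = cnj (v i) * A i a * x + cnj (v i) * A i b * y" for i
    using assms by (subst sum_two[of a b]) (auto simp: v_def)
  have "(\<Sum>i<d. \<Sum>j<d. cnj (v i) * A i j * v j) =
     cnj x * A a a * x + cnj x * A a b * y + cnj y * A b a * x + cnj y * A b b * y"
    unfolding inner using assms by (subst sum_two[of a b]) (auto simp: v_def)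
  then show "Im (cnj x * A a a * x + cnj x * A a b * y + cnj y * A b a * x + cnj y * A b b * y) = 0"
    "Re (cnj x * A a a * x + cnj x * A a b * y + cnj y * A b a * x + cnj y * A b b * y) \<ge> 0"
    using assms(1) unfolding density_def by (metis (no_types, lifting))+
qed

lemma density_herm:
  assumes "density d A" "a < d" "b < d"
  shows "A b a = cnj (A a b)"
proof (cases "a = b")
  case True
  then show ?thesis using density_diag[OF assms(1,2)] by (simp add: complex_eq_iff)
next
  case False
  have da: "Im (A a a) = 0" and db: "Im (A b b) = 0"
    using density_diag(1)[OF assms(1,2)] density_diag(1)[OF assms(1,3)] by auto
  have 1: "Im (A a b + A b a) = 0" using density_quad2(1)[OF assms False, of 1 1] da db by simp
  have 2: "Re (A a b) - Re (A b a) = 0" using density_quad2(1)[OF assms False, of 1 \<i>] da db by simp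
  show ?thesis using 1 2 by (simp add: complex_eq_iff)
qed

lemma quad_re:
  "Re (cnj x * complex_of_real \<alpha> * x + cnj x * c * y + cnj y * cnj c * x + cnj y * complex_of_real \<beta> * y)
   = \<alpha> * (cmod x)^2 + \<beta> * (cmod y)^2 + 2 * Re (cnj x * c * y)"
proof -
  have 1: "cnj y * cnj c * x = cnj (cnj x * c * y)" by simp
  have cx: "(cmod x)^2 = (Re x)^2 + (Im x)^2" "(cmod y)^2 = (Re y)^2 + (Im y)^2" by (rule cmod_power2)+
  have 2: "Re (cnj x * complex_of_real \<alpha> * x) = \<alpha> * (cmod x)^2"
    unfolding cx by (simp add: power2_eq_square algebra_simps)
  have 3: "Re (cnj y * complex_of_real \<beta> * y) = \<beta> * (cmod y)^2"
    unfolding cx by (simp add: power2_eq_square algebra_simps)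
  have 4: "Re (u + v + cnj v + w) = Re u + 2 * Re v + Re w" for u v w :: complex by simp
  show ?thesis unfolding 1 4 2 3 by simp
qed

lemma cnj_c_c: "cnj c * c = complex_of_real ((cmod c)^2)"
proof -
  have "c * cnj c = complex_of_real ((Re c)\<^sup>2 + (Im c)\<^sup>2)" by (rule complex_mult_cnj)
  then show ?thesis by (simp only: mult.commute[of "cnj c"] cmod_power2)
qed

lemma density_cs:
  assumes "density d A" "a < d" "b < d"
  shows "(cmod (A a b))^2 \<le> Re (A a a) * Re (A b b)"
proof (cases "a = b")
  case True
  have "(cmod (A a a))^2 = (Re (A a a))^2" using density_diag[OF assms(1,2)] by (simp add: cmod_power2)
  then show ?thesis using True by (simp add: power2_eq_square)
next
  case False
  define \<alpha> where "\<alpha> = Re (A a a)"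
  define \<beta> where "\<beta> = Re (A b b)"
  define c where "c = A a b"
  define n where "n = (cmod c)^2"
  have Aa: "A a a = of_real \<alpha>" using density_diag[OF assms(1,2)] by (simp add: \<alpha>_def complex_eq_iff)
  have Ab: "A b b = of_real \<beta>" using density_diag[OF assms(1,3)] by (simp add: \<beta>_def complex_eq_iff)
  have Aba: "A b a = cnj c" using density_herm[OF assms] by (simp add: c_def)
  have ag: "\<alpha> \<ge> 0" "\<beta> \<ge> 0" using density_diag assms by (auto simp: \<alpha>_def \<beta>_def)
  have Q: "\<alpha> * (cmod x)^2 + \<beta> * (cmod y)^2 + 2 * Re (cnj x * c * y) \<ge> 0" for x y
    using density_quad2(2)[OF assms False, of x y] unfolding Aa Ab Aba c_def[symmetric] quad_re .
  have goal: "n \<le> \<alpha> * \<beta>"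
  proof -
    consider "\<beta> > 0" | "\<alpha> > 0" | "\<alpha> = 0" "\<beta> = 0" using ag by linarith
    then show ?thesis
    proof cases
      case 1
      have e: "cnj (complex_of_real \<beta>) * c * (- cnj c) = - complex_of_real (\<beta> * n)"
        using cnj_c_c[of c] by (simp add: n_def algebra_simps)
      have "0 \<le> \<alpha> * \<beta>^2 + \<beta> * n - 2 * (\<beta> * n)"
        using Q[of "of_real \<beta>" "- cnj c"] ag unfolding e by (simp add: n_def)
      then have "0 \<le> \<beta> * (\<alpha> * \<beta> - n)" by (simp add: algebra_simps power2_eq_square)
      then show ?thesis using 1 by (simp add: zero_le_mult_iff)
    next
      case 2
      have e: "cnj (- c) * c * (complex_of_real \<alpha>) = - complex_of_real (\<alpha> * n)"
        using cnj_c_c[of c] by (simp add: n_def algebra_simps)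
      have "0 \<le> \<alpha> * n + \<beta> * \<alpha>^2 - 2 * (\<alpha> * n)"
        using Q[of "- c" "of_real \<alpha>"] ag unfolding e by (simp add: n_def)
      then have "0 \<le> \<alpha> * (\<alpha> * \<beta> - n)" by (simp add: algebra_simps power2_eq_square)
      then show ?thesis using 2 by (simp add: zero_le_mult_iff)
    next
      case 3
      have e: "cnj 1 * c * (- cnj c) = - complex_of_real n"
        using cnj_c_c[of c] by (simp add: n_def algebra_simps)
      have "0 \<le> - 2 * n"
        using Q[of 1 "- cnj c"] 3 unfolding e by simp
      moreover have "n \<ge> 0" by (simp add: n_def)
      ultimately show ?thesis using 3 by simp
    qed
  qed
  then show ?thesis unfolding n_def c_def \<alpha>_def \<beta>_def .
qed

lemma Dket_alt:
  assumes "x \<le> y"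
  shows "Dket x y (i,k) = (if x = min i k \<and> y = max i k then (if i = k then 1 else complex_of_real (1 / sqrt 2)) else 0)"
proof (cases "x = y")
  case True
  then show ?thesis unfolding Dket_def by (cases "i \<le> k") (auto simp: min_def max_def)
next
  case False
  then have xy: "x < y" using assms by simp
  show ?thesis unfolding Dket_def using xy
    by (cases "i \<le> k") (auto simp: min_def max_def)
qed

lemma finite_upper_pairs: "finite (upper_pairs d)"
proof -
  have "upper_pairs d \<subseteq> {..<d} \<times> {..<d}" by (auto simp: upper_pairs_def)
  then show ?thesis by (rule finite_subset) auto
qed

lemma sum_single:
  assumes "finite U" "z0 \<in> U" "\<And>z. z \<in> U \<Longrightarrow> z \<noteq> z0 \<Longrightarrow> f z = 0"
  shows "sum f U = f z0"
proof -
  have "sum f U = sum f {z0}" by (rule sum.mono_neutral_right) (use assms in auto)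
  then show ?thesis by simp
qed

lemma ds_state_entry:
  assumes "i < d" "k < d"
  shows "ds_state d p (i,k) (j,l) =
    (if min i k = min j l \<and> max i k = max j l then complex_of_real (ds_matrix d p i k) else 0)"
proof -
  have "ds_state d p (i,k) (j,l) =
     (\<lambda>(x,y). complex_of_real (p x y) * Dket x y (i,k) * cnj (Dket x y (j,l))) (min i k, max i k)"
    unfolding ds_state_def
  proof (rule sum_single[OF finite_upper_pairs])
    show "(min i k, max i k) \<in> upper_pairs d" using assms by (auto simp: upper_pairs_def)
  next
    fix z assume "z \<in> upper_pairs d" "z \<noteq> (min i k, max i k)"
    then show "(\<lambda>(x,y). complex_of_real (p x y) * Dket x y (i,k) * cnj (Dket x y (j,l))) z = 0"
    proof (cases z)
      case (Pair x y)
      have xle: "x \<le> y" using \<open>z \<in> upper_pairs d\<close> Pair by (simp add: upper_pairs_def)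
      have nc: "\<not> (x = min i k \<and> y = max i k)" using \<open>z \<noteq> _\<close> Pair by simp
      have "Dket x y (i,k) = 0" by (simp only: Dket_alt[OF xle] if_not_P[OF nc])
      then show ?thesis using Pair by simp
    qed
  qed
  also have "\<dots> = (if min i k = min j l \<and> max i k = max j l then complex_of_real (ds_matrix d p i k) else 0)"
  proof (cases "i = k")
    case True
    show ?thesis
    proof (cases "min i k = min j l \<and> max i k = max j l")
      case T: True
      then have jl: "j = l" "i = j" using True by (auto simp add: min_def max_def split: if_splits)
      have "Dket i i (i,i) = 1" "Dket i i (j,l) = 1" using jl by (simp_all add: Dket_def)
      then show ?thesis using T True jl by (simp add: ds_matrix_def)
    next
      case F: False
      have "Dket (min i k) (max i k) (j,l) = 0"
        by (simp only: Dket_alt[of "min i k" "max i k"] min.cobounded1 max.cobounded1 le_trans[OF min.cobounded1 max.cobounded2] if_not_P[OF F]) 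
      then show ?thesis using F by auto
    qed
  next
    case False
    have s2: "complex_of_real (sqrt 2) * complex_of_real (sqrt 2) = 2"
      by (simp flip: of_real_mult)
    have s: "complex_of_real (1 / sqrt 2) * complex_of_real (1 / sqrt 2) = 1/2"
      by (simp flip: of_real_mult)
    have mm: "min i k < max i k" using False by (simp add: min_def max_def)
    have e1: "Dket (min i k) (max i k) (i,k) = complex_of_real (1 / sqrt 2)"
      using False by (simp add: Dket_alt)
    show ?thesis
    proof (cases "min i k = min j l \<and> max i k = max j l")
      case True
      then have "j \<noteq> l" using mm by auto
      then have "Dket (min i k) (max i k) (j,l) = complex_of_real (1 / sqrt 2)"
        using True by (simp add: Dket_alt)
      then show ?thesis using True False e1
        by (simp add: ds_matrix_def s s2)
    next
      case F: False
      have "Dket (min i k) (max i k) (j,l) = 0"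
        by (simp only: Dket_alt[of "min i k" "max i k"] min.cobounded1 max.cobounded1 le_trans[OF min.cobounded1 max.cobounded2] if_not_P[OF F]) 
      then show ?thesis using F by auto
    qed
  qed
  finally show ?thesis .
qed

lemma sqrt_diff_sq: "x \<ge> 0 \<Longrightarrow> y \<ge> 0 \<Longrightarrow> (sqrt x - sqrt y)^2 = x + y - 2 * (sqrt x * sqrt y)"
  by (simp add: power2_eq_square algebra_simps)

lemma term_nonneg:
  assumes A: "density d A" and B: "density d B" and ab: "a < d" "b < d"
  defines "X \<equiv> Re (A a a) * Re (B b b)" and "Y \<equiv> Re (A b b) * Re (B a a)"
  shows "(sqrt X - sqrt Y)^2 \<le> X + Y - 2 * Re (A a b * B b a)"
proof -
  have X0: "X \<ge> 0" "Y \<ge> 0" using density_diag(2) A B ab by (auto simp: X_def Y_def)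
  have "Re (A a b * B b a) \<le> cmod (A a b * B b a)" by (rule complex_Re_le_cmod)
  also have "\<dots> = cmod (A a b) * cmod (B b a)" by (simp add: norm_mult)
  also have "\<dots> \<le> sqrt (Re (A a a) * Re (A b b)) * sqrt (Re (B b b) * Re (B a a))"
  proof (rule mult_mono)
    show "cmod (A a b) \<le> sqrt (Re (A a a) * Re (A b b))"
      using density_cs[OF A ab] by (simp add: real_le_rsqrt)
    show "cmod (B b a) \<le> sqrt (Re (B b b) * Re (B a a))"
      using density_cs[OF B ab(2,1)] by (simp add: real_le_rsqrt)
    show "0 \<le> cmod (B b a)" by simp
    show "0 \<le> sqrt (Re (A a a) * Re (A b b))"
      using density_diag(2)[OF A ab(1)] density_diag(2)[OF A ab(2)] by simp
  qed
  also have "\<dots> = sqrt X * sqrt Y"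
    by (simp add: X_def Y_def real_sqrt_mult[symmetric] algebra_simps)
  finally have "Re (A a b * B b a) \<le> sqrt X * sqrt Y" .
  then show ?thesis using sqrt_diff_sq[OF X0] by linarith
qed

lemma diag_equal:
  fixes n m a :: nat and w :: "nat \<Rightarrow> real" and A B :: "nat \<Rightarrow> cmat"
  assumes d2: "d \<ge> 2" and sep: "\<forall>i<d. \<forall>k<d. \<forall>j<d. \<forall>l<d.
            ds_state d p (i,k) (j,l) = (\<Sum>m<n. complex_of_real (w m) * A m i j * B m k l)"
    and w0: "\<forall>m<n. w m \<ge> 0"
    and dens: "\<forall>m<n. density d (A m) \<and> density d (B m)"
    and m: "m < n" "w m > 0" and a: "a < d"
  shows "Re (A m a a) = Re (B m a a)"
proof -
  have XY: "Re (A m a a) * Re (B m b b) = Re (A m b b) * Re (B m a a)" if b: "b < d" for b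
  proof (cases "a = b")
    case True then show ?thesis by simp
  next
    case False
    define T where "T = (\<lambda>m. Re (A m a a) * Re (B m b b) + Re (A m b b) * Re (B m a a) - 2 * Re (A m a b * B m b a))"
    have cT: "A q a a * B q b b + A q b b * B q a a - A q a b * B q b a - A q b a * B q a b = complex_of_real (T q)"
      if q: "q < n" for q
    proof -
      have hA: "A q b a = cnj (A q a b)" and hB: "B q a b = cnj (B q b a)"
        using density_herm[of d "A q" a b] density_herm[of d "B q" b a] dens q a b by auto
      have r: "A q a a = of_real (Re (A q a a))" "A q b b = of_real (Re (A q b b))"
        "B q a a = of_real (Re (B q a a))" "B q b b = of_real (Re (B q b b))"
        using density_diag(1)[of d "A q" a] density_diag(1)[of d "A q" b]
          density_diag(1)[of d "B q" a] density_diag(1)[of d "B q" b] dens q a b by (auto simp: complex_eq_iff)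
      have z: "z + cnj z = complex_of_real (2 * Re z)" for z :: complex
        by (simp add: complex_eq_iff)
      have cc: "cnj (A q a b) * cnj (B q b a) = cnj (A q a b * B q b a)" by simp
      have "A q a a * B q b b + A q b b * B q a a - A q a b * B q b a - A q b a * B q a b
         = A q a a * B q b b + A q b b * B q a a - (A q a b * B q b a + cnj (A q a b * B q b a))"
        unfolding hA hB cc by (simp add: algebra_simps)
      also have "\<dots> = complex_of_real (Re (A q a a)) * complex_of_real (Re (B q b b))
           + complex_of_real (Re (A q b b)) * complex_of_real (Re (B q a a))
           - complex_of_real (2 * Re (A q a b * B q b a))"
        unfolding z using r by simp
      also have "\<dots> = complex_of_real (T q)" unfolding T_def by simp
      finally show ?thesis .
    qed
    have e: "ds_state d p (a,b) (a,b) = ds_state d p (b,a) (b,a)"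
         "ds_state d p (a,b) (a,b) = ds_state d p (a,b) (b,a)"
         "ds_state d p (a,b) (a,b) = ds_state d p (b,a) (a,b)"
      using a b by (simp_all add: ds_state_entry ds_matrix_def min.commute max.commute)
    have "0 = ds_state d p (a,b) (a,b) + ds_state d p (b,a) (b,a) - ds_state d p (a,b) (b,a) - ds_state d p (b,a) (a,b)"
      using e by simp
    also have "\<dots> = (\<Sum>q<n. complex_of_real (w q) * (A q a a * B q b b + A q b b * B q a a - A q a b * B q b a - A q b a * B q a b))"
    proof -
      have s1: "ds_state d p (a,b) (a,b) = (\<Sum>q<n. complex_of_real (w q) * A q a a * B q b b)"
        "ds_state d p (b,a) (b,a) = (\<Sum>q<n. complex_of_real (w q) * A q b b * B q a a)"
        "ds_state d p (a,b) (b,a) = (\<Sum>q<n. complex_of_real (w q) * A q a b * B q b a)"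
        "ds_state d p (b,a) (a,b) = (\<Sum>q<n. complex_of_real (w q) * A q b a * B q a b)"
        using sep a b by blast+
      show ?thesis unfolding s1 sum_subtractf[symmetric] sum.distrib[symmetric]
        by (rule sum.cong) (simp_all add: algebra_simps)
    qed
    also have "\<dots> = (\<Sum>q<n. complex_of_real (w q * T q))"
      by (rule sum.cong) (simp_all add: cT)
    finally have s0: "(\<Sum>q<n. w q * T q) = 0"
      by (metis of_real_0 of_real_eq_iff of_real_sum)
    have Tn: "T q \<ge> 0" if q: "q < n" for q
    proof -
      have "density d (A q)" "density d (B q)" using dens q by auto
      from term_nonneg[OF this a b] show ?thesis unfolding T_def
        by (smt (verit) zero_le_power2)
    qed
    have fin: "finite {..<n}" by simp
    have nn: "\<forall>q\<in>{..<n}. 0 \<le> w q * T q"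
    proof
      fix q assume "q \<in> {..<n}"
      then have qn: "q < n" by simp
      then have "0 \<le> w q" using w0 by blast
      then show "0 \<le> w q * T q" using Tn[OF qn] by (rule mult_nonneg_nonneg)
    qed
    have "w m * T m = 0"
      by (rule sum_nonneg_0[OF fin _ s0]) (use nn m in auto)
    then have Tm: "T m = 0" using m by simp
    have "density d (A m)" "density d (B m)" using dens m by auto
    from term_nonneg[OF this a b] Tm
    have "(sqrt (Re (A m a a) * Re (B m b b)) - sqrt (Re (A m b b) * Re (B m a a)))^2 \<le> 0"
      unfolding T_def by linarith
    then have "sqrt (Re (A m a a) * Re (B m b b)) = sqrt (Re (A m b b) * Re (B m a a))"
      by simp
    then show ?thesis by simp
  qed
  have "Re (A m a a) * (\<Sum>b<d. Re (B m b b)) = (\<Sum>b<d. Re (A m a a) * Re (B m b b))"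
    by (rule sum_distrib_left)
  also have "\<dots> = (\<Sum>b<d. Re (A m b b) * Re (B m a a))"
    by (rule sum.cong) (simp_all add: XY)
  also have "\<dots> = (\<Sum>b<d. Re (A m b b)) * Re (B m a a)"
    by (rule sum_distrib_right[symmetric])
  finally have eq: "Re (A m a a) * (\<Sum>b<d. Re (B m b b)) = (\<Sum>b<d. Re (A m b b)) * Re (B m a a)" .
  have tA: "(\<Sum>i<d. A m i i) = 1" and tB: "(\<Sum>i<d. B m i i) = 1"
    using dens m unfolding density_def by auto
  have "(\<Sum>b<d. Re (B m b b)) = 1" "(\<Sum>b<d. Re (A m b b)) = 1"
    using arg_cong[OF tA, of Re] arg_cong[OF tB, of Re] by (simp_all add: Re_sum)
  then show ?thesis using eq by simp
qed

lemma pow3_ndvd: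
  assumes "a \<le> b"
  shows "\<not> (3::nat)^(a+1) dvd 3^a + 3^b"
proof
  assume h: "(3::nat)^(a+1) dvd 3^a + 3^b"
  have e: "(3::nat)^a + 3^b = 3^a * (1 + 3^(b-a))"
    using assms by (simp add: algebra_simps power_add[symmetric])
  have "(3::nat)^a * 3 dvd 3^a * (1 + 3^(b-a))" using h unfolding e by (simp add: mult.commute)
  then have "(3::nat) dvd 1 + 3^(b-a)" by (simp only: nat_mult_dvd_cancel1[of "(3::nat)^a"] zero_less_power zero_less_numeral)
  moreover have "\<not> (3::nat) dvd 1 + 3^(b-a)"
  proof (cases "b - a")
    case 0 then show ?thesis by (simp add: dvd_def) presburger
  next
    case (Suc r)
    have "(1 + 3^(b-a)) mod (3::nat) = 1" unfolding Suc by simp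
    then show ?thesis by presburger
  qed
  ultimately show False by simp
qed

lemma pow3_dvd:
  assumes "a < c" "c \<le> e"
  shows "(3::nat)^(a+1) dvd 3^c + 3^e"
proof -
  have "(3::nat)^(a+1) dvd 3^c" using assms by (intro le_imp_power_dvd) simp
  moreover have "(3::nat)^(a+1) dvd 3^e" using assms by (intro le_imp_power_dvd) simp
  ultimately show ?thesis by simp
qed

lemma pow3_min_max: "(3::nat)^i + 3^k = 3^(min i k) + 3^(max i k)"
  by (cases "i \<le> k") (simp_all add: min_def max_def)

lemma pow3_unique:
  assumes "(3::nat)^i + 3^k = 3^j + 3^l"
  shows "min i k = min j l \<and> max i k = max j l"
proof -
  define a b c e where "a = min i k" "b = max i k" "c = min j l" "e = max j l"
  have ab: "a \<le> b" and ce: "c \<le> e" by (simp_all add: a_b_c_e_def)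
  have s: "(3::nat)^a + 3^b = 3^c + 3^e"
    using assms pow3_min_max[of i k] pow3_min_max[of j l] by (simp add: a_b_c_e_def)
  have "a = c"
  proof (rule ccontr)
    assume "a \<noteq> c"
    then consider "a < c" | "c < a" by linarith
    then show False
    proof cases
      case 1
      then have "(3::nat)^(a+1) dvd 3^c + 3^e" using ce by (rule pow3_dvd)
      then show False using pow3_ndvd[OF ab] s by simp
    next
      case 2
      then have "(3::nat)^(c+1) dvd 3^a + 3^b" using ab by (rule pow3_dvd)
      then show False using pow3_ndvd[OF ce] s by simp
    qed
  qed
  then have "(3::nat)^b = 3^e" using s by simp
  then have "b = e" by simp
  with \<open>a = c\<close> show ?thesis by (simp add: a_b_c_e_def)
qed

lemma cis_avg:
  fixes N :: nat and e :: int
  assumes N: "N > 0" and eN: "\<bar>e\<bar> < int N"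
  shows "(\<Sum>t<N. cis (2 * pi * real t * of_int e / real N)) = (if e = 0 then of_nat N else 0)"
proof (cases "e = 0")
  case True then show ?thesis by simp
next
  case False
  define z where "z = cis (2 * pi * of_int e / real N)"
  have zt: "cis (2 * pi * real t * of_int e / real N) = z ^ t" for t
    by (simp add: z_def Complex.DeMoivre algebra_simps)
  have z1: "z \<noteq> 1"
  proof
    assume "z = 1"
    then have "cos (2 * pi * of_int e / real N) = 1" unfolding z_def by (simp add: complex_eq_iff)
    then obtain n :: int where n: "2 * pi * of_int e / real N = of_int n * 2 * pi"
      using cos_one_2pi_int by blast
    then have "real_of_int e = of_int n * real N" using N by (simp add: field_simps)
    then have en: "e = n * int N" by (metis of_int_eq_iff of_int_mult of_int_of_nat_eq)
    show False
    proof (cases "n = 0")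
      case True then show False using en False by simp
    next
      case nz: False
      then have "\<bar>n\<bar> \<ge> 1" by simp
      then have "\<bar>e\<bar> \<ge> int N" unfolding en abs_mult by (simp add: mult_le_cancel_right1)
      then show False using eN by simp
    qed
  qed
  have zN: "z ^ N = 1"
  proof -
    have "z ^ N = cis (real N * (2 * pi * of_int e / real N))" unfolding z_def Complex.DeMoivre ..
    also have "\<dots> = cis (2 * pi * of_int e)" using N by simp
    also have "\<dots> = 1" by (rule cis_multiple_2pi) simp
    finally show ?thesis .
  qed
  show ?thesis unfolding zt geometric_sum[OF z1] zN using False by simp
qed

lemma sum_group:
  fixes N :: nat
  assumes N: "N > 0"
  shows "(\<Sum>q<k*N. f (q div N) (q mod N)) = (\<Sum>m<k. \<Sum>t<N. f m t)"
proof -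
  have "(\<Sum>q<k*N. f (q div N) (q mod N)) = (\<Sum>m<k. \<Sum>q\<in>{m*N..<m*N+N}. f (q div N) (q mod N))"
    by (rule sum.nat_group[symmetric])
  also have "\<dots> = (\<Sum>m<k. \<Sum>t<N. f m t)"
  proof (rule sum.cong)
    fix m assume "m \<in> {..<k}"
    have "(\<Sum>q\<in>{m*N..<m*N+N}. f (q div N) (q mod N)) = (\<Sum>q\<in>{0+m*N..<N+m*N}. f (q div N) (q mod N))"
      by (simp add: add.commute)
    also have "\<dots> = (\<Sum>t\<in>{0..<N}. f ((t + m*N) div N) ((t + m*N) mod N))"
      by (rule sum.shift_bounds_nat_ivl)
    also have "\<dots> = (\<Sum>t<N. f m t)"
      using N by (intro sum.cong) auto
    finally show "(\<Sum>q\<in>{m*N..<m*N+N}. f (q div N) (q mod N)) = (\<Sum>t<N. f m t)" .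
  qed simp
  finally show ?thesis .
qed

lemma rank1_density:
  fixes \<phi> :: "nat \<Rightarrow> complex"
  assumes s: "s > 0" and tr: "(\<Sum>i<d. (cmod (\<phi> i))^2) = s"
  shows "density d (\<lambda>i j. \<phi> i * cnj (\<phi> j) / complex_of_real s)"
  unfolding density_def
proof (intro conjI allI)
  fix v :: "nat \<Rightarrow> complex"
  define z where "z = (\<Sum>i<d. cnj (v i) * \<phi> i)"
  have "(\<Sum>i<d. \<Sum>j<d. cnj (v i) * (\<phi> i * cnj (\<phi> j) / complex_of_real s) * v j)
      = (\<Sum>i<d. \<Sum>j<d. (cnj (v i) * \<phi> i) * cnj (cnj (v j) * \<phi> j)) / complex_of_real s"
    by (simp add: sum_divide_distrib algebra_simps)
  also have "\<dots> = z * cnj z / complex_of_real s"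
    unfolding z_def cnj_sum sum_product by simp
  also have "\<dots> = complex_of_real ((cmod z)^2 / s)"
    by (simp add: complex_mult_cnj cmod_power2)
  finally have e: "(\<Sum>i<d. \<Sum>j<d. cnj (v i) * (\<phi> i * cnj (\<phi> j) / complex_of_real s) * v j)
      = complex_of_real ((cmod z)^2 / s)" .
  show "Im (\<Sum>i<d. \<Sum>j<d. cnj (v i) * (\<phi> i * cnj (\<phi> j) / complex_of_real s) * v j) = 0"
    unfolding e by simp
  show "Re (\<Sum>i<d. \<Sum>j<d. cnj (v i) * (\<phi> i * cnj (\<phi> j) / complex_of_real s) * v j) \<ge> 0"
    unfolding e using s by simp
next
  have "(\<Sum>i<d. \<phi> i * cnj (\<phi> i) / complex_of_real s) = (\<Sum>i<d. complex_of_real ((cmod (\<phi> i))^2)) / complex_of_real s"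
    by (simp add: sum_divide_distrib complex_mult_cnj cmod_power2)
  also have "\<dots> = 1" unfolding of_real_sum[symmetric] tr using s by simp
  finally show "(\<Sum>i<d. \<phi> i * cnj (\<phi> i) / complex_of_real s) = 1" .
qed

lemma delta_density:
  assumes "d > 0"
  shows "density d (\<lambda>i j. if i = 0 \<and> j = 0 then 1 else 0)"
  unfolding density_def
proof (intro conjI allI)
  fix v :: "nat \<Rightarrow> complex"
  have inner: "(\<Sum>j<d. cnj (v i) * (if i = 0 \<and> j = 0 then 1 else 0) * v j) = (if i = 0 then cnj (v 0) * v 0 else 0)" for i
    using assms by (subst sum_one[of 0]) auto
  have e: "(\<Sum>i<d. \<Sum>j<d. cnj (v i) * (if i = 0 \<and> j = 0 then 1 else 0) * v j) = complex_of_real ((cmod (v 0))^2)"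
    unfolding inner using assms by (subst sum_one[of 0]) (auto simp: cnj_c_c)
  show "Im (\<Sum>i<d. \<Sum>j<d. cnj (v i) * (if i = 0 \<and> j = 0 then 1 else 0) * v j) = 0" unfolding e by simp
  show "Re (\<Sum>i<d. \<Sum>j<d. cnj (v i) * (if i = 0 \<and> j = 0 then 1 else 0) * v j) \<ge> 0" unfolding e by simp
next
  show "(\<Sum>i<d. if i = 0 \<and> i = 0 then 1 else 0 :: complex) = 1"
    using assms by (subst sum_one[of 0]) auto
qed

lemma minmax_iff: "(min i k = min j l \<and> max i k = max j l) \<longleftrightarrow> ((i = j \<and> k = l) \<or> (i = l \<and> k = j))"
  for i k j l :: nat
  by (cases "i \<le> k"; cases "j \<le> l") (auto simp: min_def max_def)

lemma sum_ds_matrix: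
  assumes "ds_weights d p"
  shows "(\<Sum>a<d. \<Sum>b<d. ds_matrix d p a b) = 1"
proof -
  define S where "S = {..<d} \<times> {..<d}"
  define f where "f = (\<lambda>(a::nat,b::nat). (min a b, max a b))"
  define g where "g = (\<lambda>(a,b). ds_matrix d p a b)"
  have finS: "finite S" by (simp add: S_def)
  have "(\<Sum>a<d. \<Sum>b<d. ds_matrix d p a b) = sum g S"
    unfolding S_def g_def by (simp add: sum.cartesian_product)
  also have "\<dots> = (\<Sum>y\<in>f ` S. sum g {x\<in>S. f x = y})"
    by (rule sum.image_gen[OF finS])
  also have "f ` S = upper_pairs d"
  proof
    show "f ` S \<subseteq> upper_pairs d" by (auto simp: f_def S_def upper_pairs_def)
    show "upper_pairs d \<subseteq> f ` S"
    proof
      fix y assume y: "y \<in> upper_pairs d"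
      obtain a b where ab: "y = (a,b)" by fastforce
      have "a \<le> b" "b < d" using y ab by (auto simp: upper_pairs_def)
      then have "f (a,b) = y" "(a,b) \<in> S" using ab by (auto simp: f_def S_def)
      then show "y \<in> f ` S" by (metis image_eqI)
    qed
  qed
  also have "(\<Sum>y\<in>upper_pairs d. sum g {x\<in>S. f x = y}) = (\<Sum>y\<in>upper_pairs d. (\<lambda>(i,j). p i j) y)"
  proof (rule sum.cong)
    fix y assume y: "y \<in> upper_pairs d"
    obtain a b where ab: "y = (a,b)" by fastforce
    have le: "a \<le> b" "b < d" using y ab by (auto simp: upper_pairs_def)
    show "sum g {x\<in>S. f x = y} = (\<lambda>(i,j). p i j) y"
    proof (cases "a = b")
      case True
      have "{x\<in>S. f x = y} = {(a,a)}"
        using le True ab by (auto simp: S_def f_def min_def max_def split: if_splits)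
      then show ?thesis using True ab by (simp add: g_def ds_matrix_def)
    next
      case False
      then have lt: "a < b" using le by simp
      have "{x\<in>S. f x = y} = {(a,b),(b,a)}"
        using le lt ab by (auto simp: S_def f_def min_def max_def split: if_splits)
      then show ?thesis using lt ab by (simp add: g_def ds_matrix_def)
    qed
  qed simp
  also have "\<dots> = 1" using assms unfolding ds_weights_def by simp
  finally show ?thesis .
qed

lemma pow3_cond:
  fixes i k j l :: nat
  shows "((3::int)^i + 3^k - 3^j - 3^l = 0) \<longleftrightarrow> (min i k = min j l \<and> max i k = max j l)"
proof
  assume "(3::int)^i + 3^k - 3^j - 3^l = 0"
  then have "int (3^i + 3^k) = int (3^j + 3^l)" by simp
  then have "(3::nat)^i + 3^k = 3^j + 3^l" by (simp only: of_nat_eq_iff)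
  then show "min i k = min j l \<and> max i k = max j l" by (rule pow3_unique)
next
  assume "min i k = min j l \<and> max i k = max j l"
  then have "(i = j \<and> k = l) \<or> (i = l \<and> k = j)" by (simp only: minmax_iff)
  then show "(3::int)^i + 3^k - 3^j - 3^l = 0" by auto
qed

lemma pow3_bound:
  fixes i k j l d :: nat
  assumes "i < d" "k < d" "j < d" "l < d"
  shows "\<bar>(3::int)^i + 3^k - 3^j - 3^l\<bar> < int (2 * 3^d + 1)"
proof -
  have b: "(3::int)^x < 3^d" if "x < d" for x using that by (simp add: power_strict_increasing)
  have p: "(3::int)^x > 0" for x by simp
  have "int (2 * 3^d + 1) = 2 * 3^d + 1" by simp
  then show ?thesis using b[OF assms(1)] b[OF assms(2)] b[OF assms(3)] b[OF assms(4)] p[of i] p[of j] p[of k] p[of l]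
    unfolding abs_less_iff by linarith
qed

lemma per_m:
  fixes c :: "nat \<Rightarrow> real" and N d i k j l :: nat
  assumes c0: "\<forall>a<d. c a \<ge> 0" and N: "N = 2*3^d+1" and idx: "i<d" "k<d" "j<d" "l<d"
  defines "s \<equiv> \<Sum>a<d. c a"
    and "\<psi> \<equiv> \<lambda>(t::nat) (a::nat). complex_of_real (sqrt (c a)) * cis (2*pi*real t*3^a/real N)"
  defines "St \<equiv> \<lambda>t. if s = 0 then (\<lambda>i j. if i=0 \<and> j=0 then 1 else 0) else (\<lambda>i j. \<psi> t i * cnj (\<psi> t j) / complex_of_real s)"
  shows "(\<Sum>t<N. complex_of_real (s^2/real N) * St t i j * St t k l)
     = complex_of_real (if min i k = min j l \<and> max i k = max j l then c i * c k else 0)"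
proof (cases "s = 0")
  case True
  have "\<forall>a\<in>{..<d}. c a = 0"
    using sum_nonneg_eq_0_iff[of "{..<d}" c] True c0 unfolding s_def by auto
  then have "c i = 0" using idx by auto
  then show ?thesis using True by simp
next
  case False
  have "N > 0" using N by simp
  then have Npos: "real N > 0" by simp
  define e :: int where "e = 3^i + 3^k - 3^j - 3^l"
  define r where "r = sqrt (c i) * sqrt (c j) * sqrt (c k) * sqrt (c l)"
  have tm: "complex_of_real (s^2/real N) * St t i j * St t k l
     = complex_of_real (r / real N) * cis (2 * pi * real t * of_int e / real N)" for t
  proof -
    have "complex_of_real (s^2/real N) * St t i j * St t k l
        = complex_of_real (1 / real N) * (\<psi> t i * cnj (\<psi> t j) * \<psi> t k * cnj (\<psi> t l))"
      using False Npos by (simp add: St_def power2_eq_square field_simps)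
    also have "\<psi> t i * cnj (\<psi> t j) * \<psi> t k * cnj (\<psi> t l)
      = complex_of_real r * (cis (2*pi*real t*3^i/real N) * cis (- (2*pi*real t*3^j/real N))
             * cis (2*pi*real t*3^k/real N) * cis (- (2*pi*real t*3^l/real N)))"
      by (simp add: \<psi>_def r_def cis_cnj)
    also have "cis (2*pi*real t*3^i/real N) * cis (- (2*pi*real t*3^j/real N))
             * cis (2*pi*real t*3^k/real N) * cis (- (2*pi*real t*3^l/real N))
        = cis (2 * pi * real t * of_int e / real N)"
      by (simp add: cis_mult e_def add_divide_distrib diff_divide_distrib algebra_simps)
    finally show ?thesis by simp
  qed
  have "(\<Sum>t<N. complex_of_real (s^2/real N) * St t i j * St t k l)
      = complex_of_real (r / real N) * (\<Sum>t<N. cis (2 * pi * real t * of_int e / real N))"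
    unfolding tm by (simp add: sum_distrib_left)
  also have "(\<Sum>t<N. cis (2 * pi * real t * of_int e / real N)) = (if e = 0 then of_nat N else 0)"
    by (rule cis_avg) (use N pow3_bound[OF idx] in \<open>simp_all add: e_def\<close>)
  also have "complex_of_real (r / real N) * (if e = 0 then of_nat N else 0)
      = complex_of_real (if e = 0 then r else 0)"
    using Npos by simp
  also have "(if e = 0 then r else 0) = (if min i k = min j l \<and> max i k = max j l then c i * c k else 0)"
  proof (cases "e = 0")
    case True
    then have cond: "min i k = min j l \<and> max i k = max j l" using pow3_cond by (simp add: e_def)
    then have "(i = j \<and> k = l) \<or> (i = l \<and> k = j)" by (simp only: minmax_iff)
    moreover have si: "sqrt (c i) * sqrt (c i) = c i" and sk: "sqrt (c k) * sqrt (c k) = c k"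
      using c0 idx by auto
    ultimately have "r = c i * c k" unfolding r_def
    proof (elim disjE conjE)
      assume "i = j" "k = l"
      then show "sqrt (c i) * sqrt (c j) * sqrt (c k) * sqrt (c l) = c i * c k"
        using si sk by (simp add: mult.assoc)
    next
      assume "i = l" "k = j"
      then have "sqrt (c i) * sqrt (c j) * sqrt (c k) * sqrt (c l) = (sqrt (c i) * sqrt (c i)) * (sqrt (c k) * sqrt (c k))"
        by (simp add: ac_simps)
      then show "sqrt (c i) * sqrt (c j) * sqrt (c k) * sqrt (c l) = c i * c k"
        using si sk by simp
    qed
    then show ?thesis using True cond by simp
  next
    case F: False
    then have "\<not> (min i k = min j l \<and> max i k = max j l)" using pow3_cond by (simp add: e_def)
    then show ?thesis using F by auto
  qed
  finally show ?thesis .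
qed

lemma cp_sep:
  assumes d2: "d \<ge> 2" and wts: "ds_weights d p" and cp: "completely_positive d (ds_matrix d p)"
  shows "separable d (ds_state d p)"
proof -
  obtain k :: nat and C :: "nat \<Rightarrow> nat \<Rightarrow> real" where k1: "k \<ge> 1"
    and C0: "\<forall>i<d. \<forall>m<k. C i m \<ge> 0"
    and CM: "\<forall>i<d. \<forall>j<d. ds_matrix d p i j = (\<Sum>m<k. C i m * C j m)"
    using cp unfolding completely_positive_def by blast
  define N :: nat where "N = 2 * 3^d + 1"
  have Npos: "N > 0" by (simp add: N_def)
  define s where "s = (\<lambda>m. \<Sum>a<d. C a m)"
  define \<psi> where "\<psi> = (\<lambda>m (t::nat) (a::nat). complex_of_real (sqrt (C a m)) * cis (2*pi*real t*3^a/real N))"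
  define St where "St = (\<lambda>m t. if s m = 0 then (\<lambda>i j. if i=0 \<and> j=0 then 1 else 0)
        else (\<lambda>i j. \<psi> m t i * cnj (\<psi> m t j) / complex_of_real (s m)))"
  define w where "w = (\<lambda>m (t::nat). (s m)^2 / real N)"
  define W where "W = (\<lambda>q. w (q div N) (q mod N))"
  define A where "A = (\<lambda>q. St (q div N) (q mod N))"
  have dens: "density d (St m t)" if m: "m < k" for m t
  proof (cases "s m = 0")
    case True
    then show ?thesis using delta_density[of d] d2 by (simp add: St_def)
  next
    case False
    have "s m \<ge> 0" unfolding s_def using C0 m by (intro sum_nonneg) auto
    then have sp: "s m > 0" using False by simp
    have "(\<Sum>a<d. (cmod (\<psi> m t a))^2) = (\<Sum>a<d. C a m)"
    proof (rule sum.cong)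
      fix a assume "a \<in> {..<d}"
      then have "C a m \<ge> 0" using C0 m by simp
      then show "(cmod (\<psi> m t a))^2 = C a m" by (simp add: \<psi>_def norm_mult)
    qed simp
    then have tr: "(\<Sum>a<d. (cmod (\<psi> m t a))^2) = s m" by (simp add: s_def)
    show ?thesis using rank1_density[OF sp tr] False by (simp add: St_def)
  qed
  show ?thesis unfolding separable_def
  proof (intro exI conjI allI impI)
    fix q assume "q < k * N"
    show "W q \<ge> 0" by (simp add: W_def w_def)
  next
    have "(\<Sum>q<k*N. W q) = (\<Sum>m<k. \<Sum>t<N. w m t)"
      unfolding W_def by (rule sum_group[OF Npos])
    also have "\<dots> = (\<Sum>m<k. (s m)^2)"
      using Npos by (simp add: w_def)
    also have "\<dots> = (\<Sum>m<k. \<Sum>a<d. \<Sum>b<d. C a m * C b m)"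
      by (simp add: s_def power2_eq_square sum_product)
    also have "\<dots> = (\<Sum>a<d. \<Sum>b<d. \<Sum>m<k. C a m * C b m)"
      by (simp add: sum.swap[of _ "{..<k}"])
    also have "\<dots> = (\<Sum>a<d. \<Sum>b<d. ds_matrix d p a b)"
      using CM by simp
    also have "\<dots> = 1" by (rule sum_ds_matrix[OF wts])
    finally show "(\<Sum>q<k*N. W q) = 1" .
  next
    fix q assume q: "q < k * N"
    then have "q div N < k" by (simp add: less_mult_imp_div_less)
    then show "density d (A q)" "density d (A q)" unfolding A_def using dens by auto
  next
    fix i k' j l assume idx: "i < d" "k' < d" "j < d" "l < d"
    have "(\<Sum>q<k*N. complex_of_real (W q) * A q i j * A q k' l)
       = (\<Sum>m<k. \<Sum>t<N. complex_of_real (w m t) * St m t i j * St m t k' l)"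
      unfolding W_def A_def by (rule sum_group[OF Npos])
    also have "\<dots> = (\<Sum>m<k. complex_of_real (if min i k' = min j l \<and> max i k' = max j l then C i m * C k' m else 0))"
    proof (rule sum.cong)
      fix m assume "m \<in> {..<k}"
      then have c0: "\<forall>a<d. C a m \<ge> 0" using C0 by auto
      show "(\<Sum>t<N. complex_of_real (w m t) * St m t i j * St m t k' l)
         = complex_of_real (if min i k' = min j l \<and> max i k' = max j l then C i m * C k' m else 0)"
        using per_m[OF c0 N_def idx] unfolding w_def St_def \<psi>_def s_def .
    qed simp
    also have "\<dots> = (if min i k' = min j l \<and> max i k' = max j l then complex_of_real (ds_matrix d p i k') else 0)"
    proof (cases "min i k' = min j l \<and> max i k' = max j l")
      case True
      have dm: "ds_matrix d p i k' = (\<Sum>m<k. C i m * C k' m)" using CM idx by blast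
      show ?thesis unfolding if_P[OF True] dm of_real_sum ..
    next
      case False
      show ?thesis unfolding if_not_P[OF False] of_real_0 sum.neutral_const ..
    qed
    also have "\<dots> = ds_state d p (i,k') (j,l)"
      using ds_state_entry[OF idx(1,2)] by simp
    finally show "ds_state d p (i,k') (j,l) = (\<Sum>q<k*N. complex_of_real (W q) * A q i j * A q k' l)" by simp
  qed
qed

lemma sep_cp:
  assumes d2: "d \<ge> 2" and sep: "separable d (ds_state d p)"
  shows "completely_positive d (ds_matrix d p)"
proof -
  obtain n :: nat and w :: "nat \<Rightarrow> real" and A B :: "nat \<Rightarrow> cmat" where
    w0: "\<forall>m<n. w m \<ge> 0" and ws: "(\<Sum>m<n. w m) = 1" and
    dens: "\<forall>m<n. density d (A m) \<and> density d (B m)" and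
    eq: "\<forall>i<d. \<forall>k<d. \<forall>j<d. \<forall>l<d.
            ds_state d p (i,k) (j,l) = (\<Sum>m<n. complex_of_real (w m) * A m i j * B m k l)"
    using sep unfolding separable_def by blast
  have n1: "n \<ge> 1"
  proof (rule ccontr)
    assume "\<not> n \<ge> 1" then have "n = 0" by simp
    then show False using ws by simp
  qed
  define Bm where "Bm = (\<lambda>i m. sqrt (w m) * Re (A m i i))"
  show ?thesis unfolding completely_positive_def
  proof (intro exI conjI allI impI)
    show "1 \<le> n" by (rule n1)
  next
    fix i m assume i: "i < d" and m: "m < n"
    have "density d (A m)" using dens m by blast
    then have "Re (A m i i) \<ge> 0" using density_diag(2) i by blast
    moreover have "w m \<ge> 0" using w0 m by blast
    ultimately show "0 \<le> Bm i m" unfolding Bm_def by simp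
  next
    fix i j assume i: "i < d" and j: "j < d"
    have "complex_of_real (ds_matrix d p i j) = ds_state d p (i,j) (i,j)"
      using ds_state_entry[OF i j, of p i j] by simp
    also have "\<dots> = (\<Sum>m<n. complex_of_real (w m) * A m i i * B m j j)"
      using eq i j by blast
    also have "\<dots> = (\<Sum>m<n. complex_of_real (Bm i m * Bm j m))"
    proof (rule sum.cong)
      fix m assume "m \<in> {..<n}"
      then have m: "m < n" by simp
      have dA: "density d (A m)" and dB: "density d (B m)" using dens m by blast+
      have rA: "A m i i = of_real (Re (A m i i))"
        using density_diag(1)[OF dA i] by (simp add: complex_eq_iff)
      have rB: "B m j j = of_real (Re (B m j j))"
        using density_diag(1)[OF dB j] by (simp add: complex_eq_iff)
      have wj: "w m * Re (B m j j) = w m * Re (A m j j)"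
      proof (cases "w m = 0")
        case True then show ?thesis by simp
      next
        case False
        then have "w m > 0" using w0 m by force
        from diag_equal[OF d2 eq w0 dens m this j] show ?thesis by simp
      qed
      have ww: "sqrt (w m) * sqrt (w m) = w m" using w0 m by simp
      have "Bm i m * Bm j m = w m * Re (A m i i) * Re (A m j j)"
        unfolding Bm_def using ww by (simp add: algebra_simps)
      also have "\<dots> = Re (A m i i) * (w m * Re (A m j j))" by (simp add: algebra_simps)
      also have "\<dots> = Re (A m i i) * (w m * Re (B m j j))" by (simp only: wj)
      also have "\<dots> = w m * Re (A m i i) * Re (B m j j)" by (simp add: algebra_simps)
      finally have "Bm i m * Bm j m = w m * Re (A m i i) * Re (B m j j)" .
      then show "complex_of_real (w m) * A m i i * B m j j = complex_of_real (Bm i m * Bm j m)"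
        by (subst rA, subst rB) simp
    qed simp
    finally show "ds_matrix d p i j = (\<Sum>m<n. Bm i m * Bm j m)"
      by (metis of_real_eq_iff of_real_sum)
  qed
qed

theorem theorem1:
  fixes d :: nat and p :: "nat \<Rightarrow> nat \<Rightarrow> real"
  assumes "d \<ge> 2"
    and "ds_weights d p"
  shows "separable d (ds_state d p) \<longleftrightarrow> completely_positive d (ds_matrix d p)"
  using sep_cp[OF assms(1)] cp_sep[OF assms] by blast

end
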